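(* In the transactional panorama model with the lenses and metrics described in the context, $I(\mathrm{LCMB}) \ge I(\mathrm{LCNB}) = I(\mathrm{ICNB})$.
   Context: A view graph is a DAG on a set $N$ of nodes (source data and views). Write transactions are processed one at a time; write transaction $w^{t_i}$ creates version $G^{t_i}$ with state set $V^{t_i}$ containing, for each node $n_k$, either its computed new result, a placeholder $UC_k^{t_i}$ if $w^{t_i}$ updates $n_k$ but has not yet computed it, or its result from the previous version if $n_k$ is not updated. A version is committed once all its new results are computed; at any time there is the committed graph (most recently committed version, no UCs) and the latest graph (version of the most recent write transaction). Read transactions $r^{s_1},\dots,r^{s_m}$ each read the views in the current viewport and return immediately a set $H^{s_i}$ of states (results or UCs); $Time(r^{s_i})$ is its return time. A returned state's timestamp is that of its version. Lenses: LCNB returns the viewport states from the more recent of the committed and latest graphs that has zero UCs for the viewport. LCMB: if reading either the committed or the latest graph preserves monotonicity (no view gets a state with smaller timestamp than previously read), behave like LCNB; otherwise read the latest graph. ICNB returns, for each view independently, its most recently computed result. Invisibility for $R=\{r^{s_1},\dots,r^{s_m}\}$: $I(R)=\sum_{i=1}^{m-1}|H^{s_i}_{UC}|\,(Time(r^{s_{i+1}})-Time(r^{s_i}))$, where $H^{s_i}_{UC}$ is the set of UCs in $H^{s_i}$. $I(A)$ denotes invisibility under lens $A$; lenses are compared on the same write transactions, the same order of computing new view results, and the same sequence of read transactions. *)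

theory Defs
  imports Complex_Main
begin

(* A state of a node in some version: either a computed result or a
   placeholder UC.  The argument is the timestamp (index of the version
   whose write transaction produced this state); version 0 is the initial
   version, whose results are all computed. *)
datatype state = Res nat | UC nat

fun ts :: "state \<Rightarrow> nat" where
  "ts (Res t) = t" | "ts (UC t) = t"

fun is_UC :: "state \<Rightarrow> bool" where
  "is_UC (Res _) = False" | "is_UC (UC _) = True"

(* An execution: view graph (DAG), write transactions 1..n_writes,
   the set of nodes each write updates, its arrival time, and the time at
   which each new result is computed (this fixes the order of computation). *)
record 'n exec =
  g_nodes  :: "'n set"
  g_edges  :: "('n \<times> 'n) set"
  n_writes :: nat
  w_upd    :: "nat \<Rightarrow> 'n set"
  w_arr    :: "nat \<Rightarrow> real"
  w_cmp    :: "nat \<Rightarrow> 'n \<Rightarrow> real"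

definition wf_exec :: "'n exec \<Rightarrow> bool" where
  "wf_exec E \<longleftrightarrow>
     finite (g_nodes E) \<and> g_edges E \<subseteq> g_nodes E \<times> g_nodes E \<and> acyclic (g_edges E) \<and>
     (\<forall>t\<in>{1..n_writes E}. w_upd E t \<subseteq> g_nodes E) \<and>
     (\<forall>t\<in>{1..n_writes E}. \<forall>t'\<in>{1..n_writes E}. t < t' \<longrightarrow> w_arr E t < w_arr E t') \<and>
     (\<forall>t\<in>{1..n_writes E}. \<forall>k\<in>w_upd E t. w_arr E t \<le> w_cmp E t k)"

definition last_upd :: "'n exec \<Rightarrow> nat \<Rightarrow> 'n \<Rightarrow> nat" where
  "last_upd E t k = (if \<exists>t'\<in>{1..t}. k \<in> w_upd E t' then Max {t'\<in>{1..t}. k \<in> w_upd E t'} else 0)"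

definition state_at :: "'n exec \<Rightarrow> nat \<Rightarrow> 'n \<Rightarrow> real \<Rightarrow> state" where
  "state_at E t k tau = (let t' = last_upd E t k in
      if t' = 0 \<or> w_cmp E t' k \<le> tau then Res t' else UC t')"

definition latest :: "'n exec \<Rightarrow> real \<Rightarrow> nat" where
  "latest E tau = Max (insert 0 {t\<in>{1..n_writes E}. w_arr E t \<le> tau})"

definition ver_done :: "'n exec \<Rightarrow> nat \<Rightarrow> real \<Rightarrow> bool" where
  "ver_done E t tau \<longleftrightarrow> t = 0 \<or> (w_arr E t \<le> tau \<and> (\<forall>k\<in>w_upd E t. w_cmp E t k \<le> tau))"

(* most recently committed version (versions are committed in order) *)
definition committed :: "'n exec \<Rightarrow> real \<Rightarrow> nat" where
  "committed E tau = Max {t\<in>{0..n_writes E}. \<forall>t'\<le>t. ver_done E t' tau}"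

definition lcnb_ver :: "'n exec \<Rightarrow> real \<Rightarrow> 'n set \<Rightarrow> nat" where
  "lcnb_ver E tau V = (if \<forall>k\<in>V. \<not> is_UC (state_at E (latest E tau) k tau)
                       then latest E tau else committed E tau)"

definition preserves_mono :: "'n exec \<Rightarrow> ('n \<Rightarrow> nat option) \<Rightarrow> real \<Rightarrow> 'n set \<Rightarrow> nat \<Rightarrow> bool" where
  "preserves_mono E prev tau V t \<longleftrightarrow>
     (\<forall>k\<in>V. \<forall>p. prev k = Some p \<longrightarrow> p \<le> ts (state_at E t k tau))"

definition lcmb_choice :: "'n exec \<Rightarrow> ('n \<Rightarrow> nat option) \<Rightarrow> real \<Rightarrow> 'n set \<Rightarrow> nat" where
  "lcmb_choice E prev tau V =
     (if preserves_mono E prev tau V (committed E tau) \<and> preserves_mono E prev tau V (latest E tau)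
      then lcnb_ver E tau V else latest E tau)"

record 'n reads =
  n_reads :: nat
  r_time  :: "nat \<Rightarrow> real"
  r_vp    :: "nat \<Rightarrow> 'n set"

definition wf_reads :: "'n exec \<Rightarrow> 'n reads \<Rightarrow> bool" where
  "wf_reads E R \<longleftrightarrow>
     (\<forall>i<n_reads R. r_vp R i \<subseteq> g_nodes E) \<and>
     (\<forall>i j. i \<le> j \<and> j < n_reads R \<longrightarrow> r_time R i \<le> r_time R j)"

fun lcmb_prev :: "'n exec \<Rightarrow> 'n reads \<Rightarrow> nat \<Rightarrow> 'n \<Rightarrow> nat option" where
  "lcmb_prev E R 0 = (\<lambda>k. None)"
| "lcmb_prev E R (Suc i) = (\<lambda>k.
     if k \<in> r_vp R i then
       (let s = ts (state_at E (lcmb_choice E (lcmb_prev E R i) (r_time R i) (r_vp R i)) k (r_time R i))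
        in case lcmb_prev E R i k of None \<Rightarrow> Some s | Some p \<Rightarrow> Some (max p s))
     else lcmb_prev E R i k)"

definition icnb_state :: "'n exec \<Rightarrow> real \<Rightarrow> 'n \<Rightarrow> state" where
  "icnb_state E tau k = (let C = {t\<in>{1..n_writes E}. k \<in> w_upd E t \<and> w_cmp E t k \<le> tau} in
     if C = {} then Res 0
     else Res (GREATEST t. t \<in> C \<and> (\<forall>t''\<in>C. w_cmp E t'' k \<le> w_cmp E t k)))"

datatype lens = LCNB | LCMB | ICNB

fun read_state :: "lens \<Rightarrow> 'n exec \<Rightarrow> 'n reads \<Rightarrow> nat \<Rightarrow> 'n \<Rightarrow> state" where
  "read_state LCNB E R i k = state_at E (lcnb_ver E (r_time R i) (r_vp R i)) k (r_time R i)"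
| "read_state LCMB E R i k =
     state_at E (lcmb_choice E (lcmb_prev E R i) (r_time R i) (r_vp R i)) k (r_time R i)"
| "read_state ICNB E R i k = icnb_state E (r_time R i) k"

definition invisibility :: "lens \<Rightarrow> 'n exec \<Rightarrow> 'n reads \<Rightarrow> real" where
  "invisibility L E R =
     (\<Sum>i<n_reads R - 1. real (card {k\<in>r_vp R i. is_UC (read_state L E R i k)})
                          * (r_time R (Suc i) - r_time R i))"

end

theory Submission
  imports Defs
begin

lemma committed_done:
  assumes "t' \<le> committed E tau"
  shows "ver_done E t' tau"
proof -
  let ?S = "{t\<in>{0..n_writes E}. \<forall>t'\<le>t. ver_done E t' tau}"
  have "0 \<in> ?S" by (simp add: ver_done_def)
  moreover have "finite ?S" by simp
  ultimately have "committed E tau \<in> ?S" unfolding committed_def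
    using Max_in[of ?S] by blast
  thus ?thesis using assms by auto
qed

lemma committed_res:
  "\<not> is_UC (state_at E (committed E tau) k tau)"
proof -
  let ?c = "committed E tau"
  let ?t = "last_upd E ?c k"
  show ?thesis
  proof (cases "\<exists>t'\<in>{1..?c}. k \<in> w_upd E t'")
    case True
    let ?A = "{t'\<in>{1..?c}. k \<in> w_upd E t'}"
    have "?A \<noteq> {}" using True by auto
    hence "Max ?A \<in> ?A" by (intro Max_in) auto
    hence m: "?t \<in> ?A" using True unfolding last_upd_def by simp
    hence "ver_done E ?t tau" by (intro committed_done) auto
    hence "w_cmp E ?t k \<le> tau" using m unfolding ver_done_def by auto
    thus ?thesis unfolding state_at_def Let_def by simp
  next
    case False
    hence "?t = 0" unfolding last_upd_def by simp
    thus ?thesis unfolding state_at_def Let_def by simp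
  qed
qed

lemma lcnb_card0:
  "card {k\<in>r_vp R i. is_UC (read_state LCNB E R i k)} = 0"
proof -
  have "{k\<in>r_vp R i. is_UC (read_state LCNB E R i k)} = {}"
    using committed_res[of E "r_time R i" _] by (auto simp: lcnb_ver_def split: if_splits)
  thus ?thesis by (simp only: card.empty)
qed

lemma icnb_card0:
  "card {k\<in>r_vp R i. is_UC (read_state ICNB E R i k)} = 0"
proof -
  have "{k\<in>r_vp R i. is_UC (read_state ICNB E R i k)} = {}"
    by (auto simp: icnb_state_def Let_def split: if_splits)
  thus ?thesis by (simp only: card.empty)
qed

theorem theorem2p10:
  fixes E :: "'n exec" and R :: "'n reads"
  assumes "wf_exec E" and "wf_reads E R"
  shows "invisibility LCMB E R \<ge> invisibility LCNB E R \<and>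
         invisibility LCNB E R = invisibility ICNB E R"
proof -
  have l: "invisibility LCNB E R = 0" unfolding invisibility_def lcnb_card0 by simp
  have c: "invisibility ICNB E R = 0" unfolding invisibility_def icnb_card0 by simp
  have "invisibility LCMB E R \<ge> 0" unfolding invisibility_def
  proof (rule sum_nonneg)
    fix i assume "i \<in> {..<n_reads R - 1}"
    hence "Suc i < n_reads R" by auto
    hence "r_time R i \<le> r_time R (Suc i)" using assms(2) unfolding wf_reads_def by auto
    thus "0 \<le> real (card {k\<in>r_vp R i. is_UC (read_state LCMB E R i k)}) * (r_time R (Suc i) - r_time R i)"
      by simp
  qed
  with l c show ?thesis by simp
qed

end
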